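(* Let $W$ be a weight matrix of size $N$ on $(a,b)$ and let $\{F_n\}_{n\ge0}$ be a sequence of matrix orthogonal functions with respect to $W$ satisfying a three term recursion $xF_n=A_nF_{n-1}+B_nF_n+C_nF_{n+1}$ ($n\ge0$) with constant matrices, $A_0=0$ and all $C_n$ nonsingular. Assume $F_0$ is $C^\infty$ on $(a,b)$. Let $D=\sum_{i=0}^s\partial^iG_i(x)$ be a right-hand side linear ordinary differential operator with matrix valued coefficients on $(a,b)$ such that $F_nD=\Lambda_nF_n$ for all $n\ge0$, with $\Lambda_n\in M_N(\mathbb C)$. Let $Q_n$ be the matrix polynomials with $F_n=Q_nF_0$ and let $\tilde D=F_0DF_0^{-1}$. Then $Q_n\tilde D=\Lambda_nQ_n$ for all $n\ge0$, and $\tilde D\in\mathcal D(F_0WF_0^* )$; in particular $\tilde D$ is hypergeometric.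
   Context: $\partial=d/dx$. A right-hand side differential operator $D=\sum_{i=0}^s\partial^iG_i(x)$ acts on a matrix function $Q$ by $QD=\sum_{i=0}^s\partial^i(Q)(x)G_i(x)$. The operator $\tilde D=F_0DF_0^{-1}$ is the operator $Q\mapsto\big((QF_0)D\big)F_0^{-1}$ (defined where $F_0$ is invertible); it is again a right-hand side differential operator with matrix coefficients. For a weight matrix $W'$ with a sequence of matrix orthogonal polynomials $\{P_n\}_{n\ge0}$ (degree $n$, nonsingular leading coefficient, mutually orthogonal for $(P,Q)=\int_a^bPW'Q^*dx$), $\mathcal D(W')$ is the algebra of all right-hand side differential operators $D$ with matrix valued coefficients such that $P_nD=\Gamma_n(D)P_n$ with $\Gamma_n(D)\in M_N(\mathbb C)$ for all $n\ge0$ (this does not depend on the chosen sequence). An operator is hypergeometric if the coefficient of its $j$th-order term is a matrix polynomial of degree at most $j$. Weight matrices and sequences of matrix orthogonal functions: $W$ integrable on $(a,b)$, $W(x)$ self-adjoint positive semidefinite, positive definite a.e.; $\{F_n\}$ are $M_N(\mathbb C)$-valued functions with $\det F_0\ne0$ a.e., $F_iWF_j^*$ integrable, and $\int_a^bF_iWF_j^*dx=0$ for $i\neq j$. *)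

theory Defs
  imports "HOL-Analysis.Analysis"
begin

type_synonym 'n cmat = "complex^'n^'n"

definition mat_adj :: "'n::finite cmat \<Rightarrow> 'n cmat" where
  "mat_adj M = (\<chi> i j. cnj (M $ j $ i))"

definition qform :: "'n::finite cmat \<Rightarrow> complex^'n \<Rightarrow> complex" where
  "qform M v = (\<Sum>i\<in>UNIV. cnj (v $ i) * (M *v v) $ i)"

definition hermitian :: "'n::finite cmat \<Rightarrow> bool" where
  "hermitian M \<longleftrightarrow> mat_adj M = M"

definition psd :: "'n::finite cmat \<Rightarrow> bool" where
  "psd M \<longleftrightarrow> (\<forall>v. Im (qform M v) = 0 \<and> 0 \<le> Re (qform M v))"

definition pd :: "'n::finite cmat \<Rightarrow> bool" where
  "pd M \<longleftrightarrow> (\<forall>v. v \<noteq> 0 \<longrightarrow> Im (qform M v) = 0 \<and> 0 < Re (qform M v))"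

definition weight_matrix :: "real set \<Rightarrow> (real \<Rightarrow> 'n::finite cmat) \<Rightarrow> bool" where
  "weight_matrix S W \<longleftrightarrow>
     set_integrable lborel S W \<and>
     (\<forall>x\<in>S. hermitian (W x) \<and> psd (W x)) \<and>
     (AE x in lborel. x \<in> S \<longrightarrow> pd (W x))"

definition mof_seq :: "real set \<Rightarrow> (real \<Rightarrow> 'n::finite cmat) \<Rightarrow> (nat \<Rightarrow> real \<Rightarrow> 'n cmat) \<Rightarrow> bool" where
  "mof_seq S W F \<longleftrightarrow>
     (AE x in lborel. x \<in> S \<longrightarrow> det (F 0 x) \<noteq> 0) \<and>
     (\<forall>i j. set_integrable lborel S (\<lambda>x. F i x ** W x ** mat_adj (F j x))) \<and>
     (\<forall>i j. i \<noteq> j \<longrightarrow> (LINT x:S|lborel. F i x ** W x ** mat_adj (F j x)) = 0)"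

definition vderiv :: "(real \<Rightarrow> 'a::real_normed_vector) \<Rightarrow> real \<Rightarrow> 'a" where
  "vderiv f = (\<lambda>x. vector_derivative f (at x))"

definition vderivs :: "nat \<Rightarrow> (real \<Rightarrow> 'a::real_normed_vector) \<Rightarrow> real \<Rightarrow> 'a" where
  "vderivs k f = (vderiv ^^ k) f"

definition smooth_on :: "real set \<Rightarrow> (real \<Rightarrow> 'a::real_normed_vector) \<Rightarrow> bool" where
  "smooth_on S f \<longleftrightarrow>
     (\<forall>k. \<forall>x\<in>S. (vderivs k f has_vector_derivative vderivs (Suc k) f x) (at x))"

text \<open>Right-hand side differential operator D = sum_{i=0}^s d^i G_i acting on Q:
  Q D = sum_{i=0}^s (d^i Q) G_i.\<close>
definition dop :: "nat \<Rightarrow> (nat \<Rightarrow> real \<Rightarrow> 'n::finite cmat) \<Rightarrow> (real \<Rightarrow> 'n cmat) \<Rightarrow> real \<Rightarrow> 'n cmat" where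
  "dop s G Q x = (\<Sum>i\<le>s. vderivs i Q x ** G i x)"

definition tilde_op :: "nat \<Rightarrow> (nat \<Rightarrow> real \<Rightarrow> 'n::finite cmat) \<Rightarrow> (real \<Rightarrow> 'n cmat)
    \<Rightarrow> (real \<Rightarrow> 'n cmat) \<Rightarrow> real \<Rightarrow> 'n cmat" where
  "tilde_op s G F0 Q x = dop s G (\<lambda>y. Q y ** F0 y) x ** matrix_inv (F0 x)"

definition mpoly_le :: "nat \<Rightarrow> (real \<Rightarrow> 'n::finite cmat) \<Rightarrow> bool" where
  "mpoly_le k P \<longleftrightarrow> (\<exists>c. \<forall>x. P x = (\<Sum>j\<le>k. x ^ j *\<^sub>R c j))"

definition mpoly_deg :: "nat \<Rightarrow> (real \<Rightarrow> 'n::finite cmat) \<Rightarrow> bool" where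
  "mpoly_deg n P \<longleftrightarrow> (\<exists>c. invertible (c n) \<and> (\<forall>x. P x = (\<Sum>j\<le>n. x ^ j *\<^sub>R c j)))"

definition mop_seq :: "real set \<Rightarrow> (real \<Rightarrow> 'n::finite cmat) \<Rightarrow> (nat \<Rightarrow> real \<Rightarrow> 'n cmat) \<Rightarrow> bool" where
  "mop_seq S W P \<longleftrightarrow>
     (\<forall>n. mpoly_deg n (P n)) \<and>
     (\<forall>i j. set_integrable lborel S (\<lambda>x. P i x ** W x ** mat_adj (P j x))) \<and>
     (\<forall>i j. i \<noteq> j \<longrightarrow> (LINT x:S|lborel. P i x ** W x ** mat_adj (P j x)) = 0)"

definition in_DW :: "real set \<Rightarrow> (real \<Rightarrow> 'n::finite cmat) \<Rightarrow> nat \<Rightarrow> (nat \<Rightarrow> real \<Rightarrow> 'n cmat) \<Rightarrow> bool" where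
  "in_DW S W s G \<longleftrightarrow>
     (\<exists>P. mop_seq S W P \<and> (\<forall>n. \<exists>\<Gamma>. \<forall>x\<in>S. dop s G (P n) x = \<Gamma> ** P n x))"

definition hypergeometric :: "real set \<Rightarrow> nat \<Rightarrow> (nat \<Rightarrow> real \<Rightarrow> 'n::finite cmat) \<Rightarrow> bool" where
  "hypergeometric S s G \<longleftrightarrow>
     (\<forall>j\<le>s. \<exists>c. \<forall>x\<in>S. G j x = (\<Sum>k\<le>j. x ^ k *\<^sub>R c k))"

end

theory Submission
  imports Defs
begin


lemma mm_rdistrib: "((A::complex^'n::finite^'m::finite) + B) ** (C::complex^'p::finite^'n) = A ** C + B ** C"
  by (vector matrix_matrix_mult_def sum.distrib[symmetric] field_simps)

lemma bilinear_mm: "bilinear (\<lambda>(A::'n::finite cmat) (B::'n cmat). A ** B)"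
  unfolding bilinear_def linear_iff
  by (auto simp: matrix_add_ldistrib mm_rdistrib matrix_scalar_ac scalar_matrix_assoc[symmetric])

lemma bb_mm: "bounded_bilinear (\<lambda>(A::'n::finite cmat) (B::'n cmat). A ** B)"
  using bilinear_mm bilinear_conv_bounded_bilinear by blast

context
  fixes a a' :: "complex^'n::finite^'m::finite" and b b' :: "complex^'p::finite^'n"
begin
lemma mm_add_left: "(a + a') ** b = a ** b + a' ** b"
  by (rule mm_rdistrib)
lemma mm_add_right: "a ** (b + b') = a ** b + a ** b'"
  by (rule matrix_add_ldistrib)
lemma mm_diff_left: "(a - a') ** b = a ** b - a' ** b"
  by (simp add: matrix_matrix_mult_def vec_eq_iff sum_subtractf[symmetric] algebra_simps)
lemma mm_diff_right: "a ** (b - b') = a ** b - a ** b'"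
  by (simp add: matrix_matrix_mult_def vec_eq_iff sum_subtractf[symmetric] algebra_simps)
lemma mm_minus_left: "(- a) ** b = - (a ** b)"
  by (simp add: matrix_matrix_mult_def vec_eq_iff sum_negf[symmetric])
lemma mm_minus_right: "a ** (- b) = - (a ** b)"
  by (simp add: matrix_matrix_mult_def vec_eq_iff sum_negf[symmetric])
lemma mm_scaleR_left: "(r *\<^sub>R a) ** b = r *\<^sub>R (a ** b)"
  by (simp add: scalar_matrix_assoc)
lemma mm_scaleR_right: "a ** (r *\<^sub>R b) = r *\<^sub>R (a ** b)"
  by (simp add: scalar_matrix_assoc matrix_scalar_ac)
end

lemma mm_sum_left: "(\<Sum>i\<in>I. (f i::complex^'n::finite^'m::finite)) ** (b::complex^'p::finite^'n) = (\<Sum>i\<in>I. f i ** b)"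
  by (induction I rule: infinite_finite_induct) (auto simp: mm_add_left)
lemma mm_sum_right: "(b::complex^'n::finite^'m::finite) ** (\<Sum>i\<in>I. (f i::complex^'p::finite^'n)) = (\<Sum>i\<in>I. b ** f i)"
  by (induction I rule: infinite_finite_induct) (auto simp: mm_add_right)

lemma matrix_inv_props:
  assumes "invertible (A::'n::finite cmat)"
  shows "A ** matrix_inv A = mat 1" "matrix_inv A ** A = mat 1"
  using someI_ex[OF assms[unfolded invertible_def]] unfolding matrix_inv_def by auto

lemma matrix_inv_invertible:
  assumes "invertible (A::'n::finite cmat)" shows "invertible (matrix_inv A)"
  using matrix_inv_props[OF assms] unfolding invertible_def by blast

definition pe :: "nat \<Rightarrow> (nat \<Rightarrow> 'n::finite cmat) \<Rightarrow> real \<Rightarrow> 'n cmat" where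
  "pe k c x = (\<Sum>j\<le>k. x ^ j *\<^sub>R c j)"

lemma mpoly_le_pe: "mpoly_le k P \<longleftrightarrow> (\<exists>c. P = pe k c)"
  unfolding mpoly_le_def pe_def by (auto simp: fun_eq_iff)

lemma pe_has_deriv:
  "(pe (Suc k) c has_vector_derivative pe k (\<lambda>j. real (Suc j) *\<^sub>R c (Suc j)) x) (at x)"
proof -
  have "(pe (Suc k) c has_vector_derivative (\<Sum>j\<le>Suc k. (real j * x ^ (j - 1)) *\<^sub>R c j)) (at x)"
    unfolding pe_def
    by (rule has_vector_derivative_sum) (auto intro!: derivative_eq_intros)
  also have "(\<Sum>j\<le>Suc k. (real j * x ^ (j - 1)) *\<^sub>R c j) = pe k (\<lambda>j. real (Suc j) *\<^sub>R c (Suc j)) x"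
    unfolding pe_def by (subst sum.atMost_Suc_shift) (simp add: algebra_simps)
  finally show ?thesis .
qed

lemma pe0[simp]: "pe 0 c = (\<lambda>x. c 0)"
  by (simp add: pe_def fun_eq_iff)

lemma vderiv_pe_Suc: "vderiv (pe (Suc k) c) = pe k (\<lambda>j. real (Suc j) *\<^sub>R c (Suc j))"
  unfolding vderiv_def using pe_has_deriv[THEN vector_derivative_at] by (auto simp: fun_eq_iff)

lemma vderiv_const: "vderiv (\<lambda>x. c) = (\<lambda>x. 0)"
  unfolding vderiv_def using vector_derivative_at[OF has_vector_derivative_const] by (auto simp: fun_eq_iff)

lemma vderiv_pe0: "vderiv (pe 0 c) = (\<lambda>x. 0)"
  by (simp add: vderiv_const)

lemma vderivs_Suc': "vderivs (Suc i) f = vderivs i (vderiv f)"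
  unfolding vderivs_def by (simp add: funpow_Suc_right del: funpow.simps)

lemma vderivs_Suc: "vderivs (Suc i) f = vderiv (vderivs i f)"
  unfolding vderivs_def by simp

lemma vderivs_0[simp]: "vderivs 0 f = f"
  unfolding vderivs_def by simp

lemma vderivs_const0: "vderivs i (\<lambda>x. 0) = (\<lambda>x. 0)"
  by (induction i) (auto simp: vderivs_Suc vderiv_const)

lemma vderivs_pe:
  "vderivs i (pe k c) = (if i \<le> k then pe (k - i) (\<lambda>j. (fact (j+i) / fact j) *\<^sub>R c (j+i)) else (\<lambda>x. 0))"
proof (induction i arbitrary: k c)
  case 0
  then show ?case by simp
next
  case (Suc i)
  show ?case
  proof (cases k)
    case 0
    then show ?thesis by (simp add: vderivs_Suc' vderiv_pe0 vderivs_const0 del: pe0)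
  next
    case (Suc k')
    have "vderivs (Suc i) (pe k c) = vderivs i (pe k' (\<lambda>j. real (Suc j) *\<^sub>R c (Suc j)))"
      using Suc by (simp add: vderivs_Suc' vderiv_pe_Suc)
    also have "\<dots> = (if Suc i \<le> k then pe (k - Suc i) (\<lambda>j. (fact (j + Suc i) / fact j) *\<^sub>R c (j + Suc i)) else (\<lambda>x. 0))"
      unfolding Suc.IH using Suc
      by (auto intro!: arg_cong[where f="pe _"] arg_cong2[where f=scaleR] simp: fun_eq_iff scaleR_scaleR mult.commute)
    finally show ?thesis .
  qed
qed

lemma pe_ext: "k \<le> m \<Longrightarrow> pe m (\<lambda>j. if j \<le> k then c j else 0) = pe k c"
  unfolding pe_def fun_eq_iff
  by (auto intro!: sum.mono_neutral_cong_right split: if_splits)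

lemma mpoly_le_mono: "mpoly_le k P \<Longrightarrow> k \<le> m \<Longrightarrow> mpoly_le m P"
  unfolding mpoly_le_pe using pe_ext by metis

lemma mpoly_le_const: "mpoly_le 0 (\<lambda>x. M)"
  unfolding mpoly_le_pe by (rule exI[of _ "\<lambda>_. M"]) simp

lemma mpoly_le_zero: "mpoly_le k (\<lambda>x. 0)"
  unfolding mpoly_le_def by (rule exI[of _ "\<lambda>_. 0"]) simp

lemma mpoly_le_add: "mpoly_le k P \<Longrightarrow> mpoly_le k R \<Longrightarrow> mpoly_le k (\<lambda>x. P x + R x)"
proof -
  assume "mpoly_le k P" "mpoly_le k R"
  then obtain c d where "P = pe k c" "R = pe k d" unfolding mpoly_le_pe by blast
  then have "(\<lambda>x. P x + R x) = pe k (\<lambda>j. c j + d j)"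
    by (simp add: pe_def fun_eq_iff scaleR_add_right sum.distrib)
  then show ?thesis unfolding mpoly_le_pe by blast
qed

lemma mpoly_le_uminus: "mpoly_le k P \<Longrightarrow> mpoly_le k (\<lambda>x. - P x)"
proof -
  assume "mpoly_le k P"
  then obtain c where "P = pe k c" unfolding mpoly_le_pe by blast
  then have "(\<lambda>x. - P x) = pe k (\<lambda>j. - c j)"
    by (simp add: pe_def fun_eq_iff sum_negf)
  then show ?thesis unfolding mpoly_le_pe by blast
qed

lemma mpoly_le_diff: "mpoly_le k P \<Longrightarrow> mpoly_le k R \<Longrightarrow> mpoly_le k (\<lambda>x. P x - R x)"
  using mpoly_le_add[of k P "\<lambda>x. - R x"] mpoly_le_uminus by auto

lemma mpoly_le_lmult: "mpoly_le k P \<Longrightarrow> mpoly_le k (\<lambda>x. M ** P x)"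
proof -
  assume "mpoly_le k P"
  then obtain c where "P = pe k c" unfolding mpoly_le_pe by blast
  then have "(\<lambda>x. M ** P x) = pe k (\<lambda>j. M ** c j)"
    by (simp add: pe_def fun_eq_iff mm_sum_right mm_scaleR_right)
  then show ?thesis unfolding mpoly_le_pe by blast
qed

lemma mpoly_le_rmult: "mpoly_le k P \<Longrightarrow> mpoly_le k (\<lambda>x. P x ** M)"
proof -
  assume "mpoly_le k P"
  then obtain c where "P = pe k c" unfolding mpoly_le_pe by blast
  then have "(\<lambda>x. P x ** M) = pe k (\<lambda>j. c j ** M)"
    by (simp add: pe_def fun_eq_iff mm_sum_left mm_scaleR_left)
  then show ?thesis unfolding mpoly_le_pe by blast
qed

lemma pe_Suc_shift: "pe (Suc k) d x = d 0 + x *\<^sub>R pe k (\<lambda>j. d (Suc j)) x"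
  unfolding pe_def by (subst sum.atMost_Suc_shift) (simp add: scaleR_sum_right)

lemma mpoly_le_xmult: "mpoly_le k P \<Longrightarrow> mpoly_le (Suc k) (\<lambda>x. x *\<^sub>R P x)"
proof -
  assume "mpoly_le k P"
  then obtain c where c: "P = pe k c" unfolding mpoly_le_pe by blast
  have "(\<lambda>x. x *\<^sub>R P x) = pe (Suc k) (\<lambda>j. if j = 0 then 0 else c (j - 1))"
    unfolding c fun_eq_iff pe_Suc_shift by simp
  then show ?thesis unfolding mpoly_le_pe by blast
qed

lemma mpoly_le_sum: "finite I \<Longrightarrow> (\<And>i. i \<in> I \<Longrightarrow> mpoly_le k (f i)) \<Longrightarrow> mpoly_le k (\<lambda>x. \<Sum>i\<in>I. f i x)"
  by (induction I rule: finite_induct) (auto intro: mpoly_le_add mpoly_le_zero)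

lemma mpoly_le_mult: "mpoly_le a P \<Longrightarrow> mpoly_le b R \<Longrightarrow> mpoly_le (a + b) (\<lambda>x. P x ** R x)"
proof (induction b arbitrary: R)
  case 0
  then obtain c where "R = pe 0 c" unfolding mpoly_le_pe by blast
  then show ?case using mpoly_le_rmult[OF 0(1)] by simp
next
  case (Suc b)
  then obtain d where d: "R = pe (Suc b) d" unfolding mpoly_le_pe by blast
  have "mpoly_le b (pe b (\<lambda>j. d (Suc j)))" unfolding mpoly_le_pe by blast
  then have 1: "mpoly_le (a + b) (\<lambda>x. P x ** pe b (\<lambda>j. d (Suc j)) x)" using Suc by blast
  have 2: "mpoly_le (a + Suc b) (\<lambda>x. P x ** d 0)"
    using mpoly_le_rmult[OF Suc(2)] mpoly_le_mono le_add1 by blast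
  have "(\<lambda>x. P x ** R x) = (\<lambda>x. P x ** d 0 + x *\<^sub>R (P x ** pe b (\<lambda>j. d (Suc j)) x))"
    unfolding d pe_Suc_shift by (simp add: mm_add_right mm_scaleR_right)
  moreover have "mpoly_le (a + Suc b) (\<lambda>x. x *\<^sub>R (P x ** pe b (\<lambda>j. d (Suc j)) x))"
    using mpoly_le_xmult[OF 1] by simp
  ultimately show ?case using mpoly_le_add[OF 2] by simp
qed

lemma pe_continuous: "continuous_on UNIV (pe k c)"
  unfolding pe_def by (intro continuous_intros)

lemma mpoly_le_continuous: "mpoly_le k P \<Longrightarrow> continuous_on UNIV P"
  unfolding mpoly_le_pe using pe_continuous by blast

lemma mpoly_le_vderivs: "mpoly_le k P \<Longrightarrow> i \<le> k \<Longrightarrow> mpoly_le (k - i) (vderivs i P)"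
  unfolding mpoly_le_pe by (auto simp: vderivs_pe)

lemma mpoly_le_pe_I: "mpoly_le k (pe k c)"
  unfolding mpoly_le_pe by blast

lemma mpoly_le_vderivs': "mpoly_le k P \<Longrightarrow> mpoly_le k (vderivs i P)"
  unfolding mpoly_le_pe[of k P]
  by (cases "i \<le> k") (auto simp: vderivs_pe intro!: mpoly_le_mono[OF mpoly_le_pe_I] mpoly_le_zero)

lemma mpoly_le_vderivs_zero: "mpoly_le k P \<Longrightarrow> k < i \<Longrightarrow> vderivs i P x = 0"
  unfolding mpoly_le_pe by (auto simp: vderivs_pe)

lemma pe_has_vderiv: "(pe m c has_vector_derivative vderiv (pe m c) x) (at x)"
proof (cases m)
  case 0
  then show ?thesis by (simp add: vderiv_const)
next
  case (Suc m')
  then show ?thesis using pe_has_deriv vderiv_pe_Suc by metis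
qed

lemma mpoly_le_smooth: "mpoly_le k P \<Longrightarrow> (vderivs i P has_vector_derivative vderivs (Suc i) P x) (at x)"
  unfolding mpoly_le_pe vderivs_Suc
  by (auto simp: vderivs_pe vderiv_const intro: pe_has_vderiv)

lemma mpoly_deg_le: "mpoly_deg k P \<Longrightarrow> mpoly_le k P"
  unfolding mpoly_deg_def mpoly_le_def by blast

lemma mpoly_deg_top: "mpoly_deg k P \<Longrightarrow> \<exists>M. invertible M \<and> vderivs k P = (\<lambda>x. M)"
proof -
  assume "mpoly_deg k P"
  then obtain c where c: "invertible (c k)" "P = pe k c" unfolding mpoly_deg_def pe_def by (auto simp: fun_eq_iff)
  have "vderivs k P = (\<lambda>x. fact k *\<^sub>R c k)" unfolding c by (simp add: vderivs_pe)
  moreover have "invertible (fact k *\<^sub>R c k)" using c by (intro scalar_invertible) auto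
  ultimately show ?thesis by blast
qed

lemma mpoly_deg_one: "mpoly_deg 0 (\<lambda>x. mat 1)"
  unfolding mpoly_deg_def by (rule exI[of _ "\<lambda>_. mat 1"]) (simp add: invertible_def)

lemma mpoly_deg_lmult: "invertible M \<Longrightarrow> mpoly_deg k P \<Longrightarrow> mpoly_deg k (\<lambda>x. M ** P x)"
proof -
  assume M: "invertible M" and "mpoly_deg k P"
  then obtain c where c: "invertible (c k)" "\<forall>x. P x = (\<Sum>j\<le>k. x ^ j *\<^sub>R c j)" unfolding mpoly_deg_def by blast
  have "invertible (M ** c k)" using M c invertible_mult by blast
  moreover have "\<forall>x. M ** P x = (\<Sum>j\<le>k. x ^ j *\<^sub>R (M ** c j))"
    using c by (simp add: mm_sum_right mm_scaleR_right)
  ultimately show ?thesis unfolding mpoly_deg_def by (intro exI[of _ "\<lambda>j. M ** c j"]) auto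
qed

lemma mpoly_deg_step: "mpoly_deg n P \<Longrightarrow> mpoly_le n R \<Longrightarrow> mpoly_deg (Suc n) (\<lambda>x. x *\<^sub>R P x + R x)"
proof -
  assume "mpoly_deg n P" "mpoly_le n R"
  then obtain c d where c: "invertible (c n)" "P = pe n c" and d: "R = pe n d"
    unfolding mpoly_deg_def mpoly_le_pe pe_def by (auto simp: fun_eq_iff)
  define e where "e j = (if j = 0 then 0 else c (j - 1)) + (if j \<le> n then d j else 0)" for j
  have "pe (Suc n) e x = x *\<^sub>R P x + R x" for x
  proof -
    have "pe (Suc n) e x = pe (Suc n) (\<lambda>j. if j = 0 then 0 else c (j - 1)) x + pe (Suc n) (\<lambda>j. if j \<le> n then d j else 0) x"
      unfolding pe_def e_def by (simp add: scaleR_add_right sum.distrib)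
    also have "\<dots> = x *\<^sub>R P x + R x"
      unfolding c d pe_Suc_shift[of n "\<lambda>j. if j = 0 then 0 else c (j - 1)"] pe_ext[OF le_SucI[OF order_refl]]
      by simp
    finally show ?thesis .
  qed
  moreover have "e (Suc n) = c n" unfolding e_def by simp
  ultimately show ?thesis unfolding mpoly_deg_def pe_def using c(1)
    by (intro exI[of _ e]) auto
qed




lemma vector_derivative_local:
  assumes "open S" "x \<in> S" "\<And>y. y \<in> S \<Longrightarrow> f y = g y"
  shows "vector_derivative f (at x) = vector_derivative g (at x)"
proof -
  have "\<And>f'. (f has_vector_derivative f') (at x) \<longleftrightarrow> (g has_vector_derivative f') (at x)"
    using has_vector_derivative_transform_within_open[OF _ assms(1,2)] assms(3) by metis
  then show ?thesis unfolding vector_derivative_def by simp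
qed

lemma vderivs_local:
  assumes "open S" "\<And>y. y \<in> S \<Longrightarrow> f y = g y"
  shows "x \<in> S \<Longrightarrow> vderivs k f x = vderivs k g x"
proof (induction k arbitrary: x)
  case 0
  then show ?case using assms by simp
next
  case (Suc k)
  then show ?case unfolding vderivs_Suc vderiv_def
    using vector_derivative_local[OF assms(1) Suc.prems] Suc.IH by blast
qed

lemma pascal_sum:
  fixes f :: "nat \<Rightarrow> 'a::real_vector"
  shows "(\<Sum>k\<le>Suc n. real (Suc n choose k) *\<^sub>R f k)
       = (\<Sum>k\<le>n. real (n choose k) *\<^sub>R f (Suc k)) + (\<Sum>k\<le>n. real (n choose k) *\<^sub>R f k)"
proof -
  have 1: "(\<Sum>k\<le>Suc n. real (Suc n choose k) *\<^sub>R f k)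
      = f 0 + (\<Sum>k\<le>n. real (Suc n choose Suc k) *\<^sub>R f (Suc k))"
    by (subst sum.atMost_Suc_shift) simp
  have 2: "(\<Sum>k\<le>n. real (Suc n choose Suc k) *\<^sub>R f (Suc k)) = (\<Sum>k\<le>n. real (n choose k) *\<^sub>R f (Suc k)) + (\<Sum>k\<le>n. real (n choose Suc k) *\<^sub>R f (Suc k))"
    by (simp only: binomial_Suc_Suc of_nat_add scaleR_add_left sum.distrib)
  have 3: "(\<Sum>k\<le>Suc n. real (n choose k) *\<^sub>R f k) = f 0 + (\<Sum>k\<le>n. real (n choose Suc k) *\<^sub>R f (Suc k))"
    by (subst sum.atMost_Suc_shift) simp
  have 4: "(\<Sum>k\<le>Suc n. real (n choose k) *\<^sub>R f k) = (\<Sum>k\<le>n. real (n choose k) *\<^sub>R f k)"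
    by (simp only: sum.atMost_Suc binomial_eq_0[of n "Suc n"] lessI) simp
  show ?thesis using 1 2 3 4 by (simp add: algebra_simps)
qed

lemma leibniz:
  fixes R F :: "real \<Rightarrow> 'n::finite cmat"
  assumes S: "open S" and R: "smooth_on S R" and F: "smooth_on S F"
  shows "x \<in> S \<Longrightarrow> vderivs n (\<lambda>y. R y ** F y) x
     = (\<Sum>k\<le>n. real (n choose k) *\<^sub>R (vderivs k R x ** vderivs (n - k) F x))"
proof (induction n arbitrary: x)
  case 0
  then show ?case by simp
next
  case (Suc n)
  define L where "L y = (\<Sum>k\<le>n. real (n choose k) *\<^sub>R (vderivs k R y ** vderivs (n - k) F y))" for y
  have dR: "\<And>k. (vderivs k R has_vector_derivative vderivs (Suc k) R x) (at x)"
    using R Suc.prems unfolding smooth_on_def by blast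
  have dF: "\<And>k. (vderivs k F has_vector_derivative vderivs (Suc k) F x) (at x)"
    using F Suc.prems unfolding smooth_on_def by blast
  have tm: "((\<lambda>y. vderivs k R y ** vderivs (n - k) F y) has_vector_derivative
      (vderivs k R x ** vderivs (Suc (n - k)) F x + vderivs (Suc k) R x ** vderivs (n - k) F x)) (at x)" for k
    by (rule bounded_bilinear.has_vector_derivative[OF bb_mm dR dF])
  have "(L has_vector_derivative
      (\<Sum>k\<le>n. real (n choose k) *\<^sub>R (vderivs k R x ** vderivs (Suc (n - k)) F x + vderivs (Suc k) R x ** vderivs (n - k) F x))) (at x)"
    unfolding L_def
    by (intro has_vector_derivative_sum bounded_linear.has_vector_derivative[OF bounded_linear_scaleR_right tm])
  also have "(\<Sum>k\<le>n. real (n choose k) *\<^sub>R (vderivs k R x ** vderivs (Suc (n - k)) F x + vderivs (Suc k) R x ** vderivs (n - k) F x))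
     = (\<Sum>k\<le>Suc n. real (Suc n choose k) *\<^sub>R (vderivs k R x ** vderivs (Suc n - k) F x))"
  proof -
    have a: "(\<Sum>k\<le>n. real (n choose k) *\<^sub>R (vderivs k R x ** vderivs (Suc (n - k)) F x))
        = (\<Sum>k\<le>n. real (n choose k) *\<^sub>R (vderivs k R x ** vderivs (Suc n - k) F x))"
      by (intro sum.cong refl) (simp add: Suc_diff_le)
    show ?thesis
      unfolding pascal_sum[where f="\<lambda>k. vderivs k R x ** vderivs (Suc n - k) F x"] a[symmetric]
      by (simp only: scaleR_add_right sum.distrib diff_Suc_Suc add.commute)
  qed
  finally have "(L has_vector_derivative (\<Sum>k\<le>Suc n. real (Suc n choose k) *\<^sub>R (vderivs k R x ** vderivs (Suc n - k) F x))) (at x)" .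
  then have "(vderivs n (\<lambda>y. R y ** F y) has_vector_derivative (\<Sum>k\<le>Suc n. real (Suc n choose k) *\<^sub>R (vderivs k R x ** vderivs (Suc n - k) F x))) (at x)"
    by (rule has_vector_derivative_transform_within_open[OF _ S Suc.prems]) (simp add: L_def Suc.IH)
  then show ?case unfolding vderivs_Suc vderiv_def by (rule vector_derivative_at)
qed

lemma dense_inv:
  fixes F0 :: "real \<Rightarrow> 'n::finite cmat"
  assumes S: "open S" and ae: "AE x in lborel. x \<in> S \<longrightarrow> det (F0 x) \<noteq> 0" and x: "x \<in> S"
  shows "x \<in> closure {y \<in> S. invertible (F0 y)}"
proof (rule ccontr)
  assume "x \<notin> closure {y \<in> S. invertible (F0 y)}"
  then obtain e where e: "e > 0" "\<forall>y\<in>{y \<in> S. invertible (F0 y)}. \<not> dist y x < e"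
    unfolding closure_approachable by auto
  obtain e' where e': "e' > 0" "ball x e' \<subseteq> S" using S x open_contains_ball by blast
  define d where "d = min e e'"
  have d: "d > 0" using e e' by (simp add: d_def)
  have sub: "y \<in> S \<and> det (F0 y) = 0" if "y \<in> ball x d" for y
  proof -
    have "y \<in> S" using that e'(2) by (auto simp: d_def)
    moreover have "dist y x < e" using that by (simp add: d_def dist_commute)
    ultimately show ?thesis using e(2) by (auto simp: invertible_det_nz)
  qed
  have "AE y in lborel. y \<notin> ball x d"
    using ae by (rule AE_mp) (use sub in blast)
  then have "emeasure lborel (ball x d) = 0"
    by (subst (asm) AE_iff_measurable[of "ball x d"]) auto
  moreover have "emeasure lborel (ball x d) = ennreal (2 * d)"
    using d by (simp add: ball_eq_greaterThanLessThan)
  ultimately show False using d by simp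
qed

lemma mat_adj_mult: "mat_adj ((A::'n::finite cmat) ** B) = mat_adj B ** mat_adj A"
  unfolding mat_adj_def matrix_matrix_mult_def by (simp add: vec_eq_iff mult.commute)

lemma mat_adj_adj: "mat_adj (mat_adj (A::'n::finite cmat)) = A"
  unfolding mat_adj_def by (simp add: vec_eq_iff)

lemma qform_aux: "(\<Sum>i\<in>UNIV. cnj (v $ i) * ((M::'n::finite cmat) *v y) $ i)
   = (\<Sum>j\<in>UNIV. cnj ((mat_adj M *v v) $ j) * y $ j)"
proof -
  have L: "(\<Sum>i\<in>UNIV. cnj (v $ i) * (M *v y) $ i) = (\<Sum>i\<in>UNIV. \<Sum>j\<in>UNIV. cnj (v $ i) * (M $ i $ j * y $ j))"
    unfolding matrix_vector_mult_def by (simp add: sum_distrib_left)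
  have R: "(\<Sum>j\<in>UNIV. cnj ((mat_adj M *v v) $ j) * y $ j) = (\<Sum>j\<in>UNIV. \<Sum>i\<in>UNIV. cnj (v $ i) * (M $ i $ j * y $ j))"
    unfolding matrix_vector_mult_def mat_adj_def by (simp add: sum_distrib_right sum_distrib_left mult_ac)
  show ?thesis unfolding L R by (rule sum.swap)
qed

lemma qform_congr: "qform ((M::'n::finite cmat) ** W ** mat_adj M) v = qform W (mat_adj M *v v)"
  unfolding qform_def
  by (simp add: matrix_vector_mul_assoc[symmetric] qform_aux)

lemma adj_inj: assumes "invertible (M::'n::finite cmat)" "mat_adj M *v v = 0" shows "v = 0"
proof -
  obtain Mi where "M ** Mi = mat 1" using assms(1) invertible_def by blast
  then have "mat_adj Mi ** mat_adj M = mat 1" using mat_adj_mult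
    by (metis mat_adj_adj matrix_mul_lid matrix_mul_rid)
  then have "v = mat_adj Mi *v (mat_adj M *v v)" by (simp add: matrix_vector_mul_assoc)
  then show ?thesis using assms(2) by simp
qed




fun qrec :: "(nat \<Rightarrow> 'n::finite cmat) \<Rightarrow> (nat \<Rightarrow> 'n cmat) \<Rightarrow> (nat \<Rightarrow> 'n cmat) \<Rightarrow> nat \<Rightarrow> real \<Rightarrow> 'n cmat" where
  "qrec A B C 0 = (\<lambda>x. mat 1)"
| "qrec A B C (Suc n) = (\<lambda>x. matrix_inv (C n) ** (x *\<^sub>R qrec A B C n x + (- (A n ** qrec A B C (n - 1) x) - B n ** qrec A B C n x)))"

lemma qrec_F:
  assumes rec: "\<And>n x. x \<in> S \<Longrightarrow>
        x *\<^sub>R F n x = A n ** F (n - 1) x + B n ** F n x + C n ** F (Suc n) x"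
    and C_inv: "\<And>n. invertible (C n)" and x: "x \<in> S"
  shows "F n x = qrec A B C n x ** F 0 x"
proof (induction n rule: less_induct)
  case (less n)
  show ?case
  proof (cases n)
    case 0
    then show ?thesis by simp
  next
    case (Suc m)
    have IH: "F m x = qrec A B C m x ** F 0 x" "F (m - 1) x = qrec A B C (m - 1) x ** F 0 x"
      using less[of m] less[of "m - 1"] Suc by auto
    have "C m ** F (Suc m) x = x *\<^sub>R F m x + (- (A m ** F (m - 1) x) - B m ** F m x)"
      using rec[OF x, of m] by (simp add: algebra_simps)
    moreover have "F (Suc m) x = matrix_inv (C m) ** (C m ** F (Suc m) x)"
      by (simp add: matrix_mul_assoc matrix_inv_props(2)[OF C_inv])
    ultimately have "F (Suc m) x = matrix_inv (C m) ** (x *\<^sub>R F m x + (- (A m ** F (m - 1) x) - B m ** F m x))"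
      by simp
    also have "\<dots> = qrec A B C (Suc m) x ** F 0 x"
      unfolding IH by (simp only: matrix_mul_assoc[symmetric] mm_add_left mm_diff_left mm_minus_left mm_scaleR_left qrec.simps)
    finally show ?thesis using Suc by simp
  qed
qed

lemma qrec_deg:
  assumes C_inv: "\<And>n. invertible (C n)"
  shows "mpoly_deg n (qrec A B C n)"
proof (induction n rule: less_induct)
  case (less n)
  show ?case
  proof (cases n)
    case 0
    then show ?thesis using mpoly_deg_one by simp
  next
    case (Suc m)
    have IH: "mpoly_deg m (qrec A B C m)" "mpoly_deg (m - 1) (qrec A B C (m - 1))"
      using less[of m] less[of "m - 1"] Suc by auto
    have le: "mpoly_le m (qrec A B C (m - 1))"
      using mpoly_le_mono[OF mpoly_deg_le[OF IH(2)]] by simp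
    have "mpoly_le m (\<lambda>x. - (A m ** qrec A B C (m - 1) x) - B m ** qrec A B C m x)"
      by (rule mpoly_le_diff[OF mpoly_le_uminus[OF mpoly_le_lmult[OF le]] mpoly_le_lmult[OF mpoly_deg_le[OF IH(1)]]])
    from mpoly_deg_step[OF IH(1) this]
    have "mpoly_deg (Suc m) (\<lambda>x. x *\<^sub>R qrec A B C m x + (- (A m ** qrec A B C (m - 1) x) - B m ** qrec A B C m x))" .
    from mpoly_deg_lmult[OF matrix_inv_invertible[OF C_inv] this] show ?thesis using Suc by simp
  qed
qed




lemma weight_new:
  fixes W :: "real \<Rightarrow> 'n::finite cmat" and F0 :: "real \<Rightarrow> 'n cmat"
  assumes W: "weight_matrix S W"
    and ae: "AE x in lborel. x \<in> S \<longrightarrow> det (F0 x) \<noteq> 0"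
    and int: "set_integrable lborel S (\<lambda>x. F0 x ** W x ** mat_adj (F0 x))"
  shows "weight_matrix S (\<lambda>x. F0 x ** W x ** mat_adj (F0 x))"
proof -
  have herm: "hermitian (F0 x ** W x ** mat_adj (F0 x)) \<and> psd (F0 x ** W x ** mat_adj (F0 x))" if "x \<in> S" for x
  proof
    have "mat_adj (W x) = W x" using W that unfolding weight_matrix_def hermitian_def by blast
    then show "hermitian (F0 x ** W x ** mat_adj (F0 x))"
      unfolding hermitian_def by (simp add: mat_adj_mult mat_adj_adj matrix_mul_assoc)
    have "psd (W x)" using W that unfolding weight_matrix_def by blast
    then show "psd (F0 x ** W x ** mat_adj (F0 x))"
      unfolding psd_def qform_congr by blast
  qed
  have "AE x in lborel. x \<in> S \<longrightarrow> pd (W x)" using W unfolding weight_matrix_def by blast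
  then have "AE x in lborel. x \<in> S \<longrightarrow> pd (F0 x ** W x ** mat_adj (F0 x))"
    using ae
  proof eventually_elim
    case (elim x)
    show ?case
    proof
      assume x: "x \<in> S"
      have inv: "invertible (F0 x)" using elim x by (simp add: invertible_det_nz)
      show "pd (F0 x ** W x ** mat_adj (F0 x))"
        unfolding pd_def qform_congr
      proof (intro allI impI)
        fix v :: "complex^'n" assume "v \<noteq> 0"
        then have "mat_adj (F0 x) *v v \<noteq> 0" using adj_inj[OF inv] by blast
        then show "Im (qform (W x) (mat_adj (F0 x) *v v)) = 0 \<and> 0 < Re (qform (W x) (mat_adj (F0 x) *v v))"
          using elim x unfolding pd_def by blast
      qed
    qed
  qed
  then show ?thesis using int herm unfolding weight_matrix_def by blast
qed




theorem corollary2p2: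
  fixes S :: "real set"
    and W :: "real \<Rightarrow> 'n::finite cmat"
    and F :: "nat \<Rightarrow> real \<Rightarrow> 'n cmat"
    and A B C :: "nat \<Rightarrow> 'n cmat"
    and s :: nat
    and G :: "nat \<Rightarrow> real \<Rightarrow> 'n cmat"
    and \<Lambda> :: "nat \<Rightarrow> 'n cmat"
  assumes S_open: "open S" and S_interval: "is_interval S" and S_ne: "S \<noteq> {}"
    and W_weight: "weight_matrix S W"
    and F_mof: "mof_seq S W F"
    and rec: "\<And>n x. x \<in> S \<Longrightarrow>
        x *\<^sub>R F n x = A n ** F (n - 1) x + B n ** F n x + C n ** F (Suc n) x"
    and A0: "A 0 = 0"
    and C_inv: "\<And>n. invertible (C n)"
    and F0_smooth: "smooth_on S (F 0)"
    and eigen: "\<And>n x. x \<in> S \<Longrightarrow> dop s G (F n) x = \<Lambda> n ** F n x"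
  shows "(\<exists>Q. (\<forall>n. \<exists>k. mpoly_le k (Q n)) \<and> (\<forall>n. \<forall>x\<in>S. F n x = Q n x ** F 0 x))
       \<and> (\<forall>Q. (\<forall>n. \<exists>k. mpoly_le k (Q n)) \<and> (\<forall>n. \<forall>x\<in>S. F n x = Q n x ** F 0 x) \<longrightarrow>
           (\<forall>n. \<forall>x\<in>S. invertible (F 0 x) \<longrightarrow> tilde_op s G (F 0) (Q n) x = \<Lambda> n ** Q n x)
         \<and> weight_matrix S (\<lambda>x. F 0 x ** W x ** mat_adj (F 0 x))
         \<and> (\<exists>Gt. (\<forall>R. smooth_on S R \<longrightarrow>
                    (\<forall>x\<in>S. invertible (F 0 x) \<longrightarrow> tilde_op s G (F 0) R x = dop s Gt R x))
                \<and> (\<forall>n. \<forall>x\<in>S. dop s Gt (Q n) x = \<Lambda> n ** Q n x)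
                \<and> in_DW S (\<lambda>x. F 0 x ** W x ** mat_adj (F 0 x)) s Gt
                \<and> hypergeometric S s Gt))"
proof -
  let ?F0 = "F 0"
  define Inv where "Inv = {x \<in> S. invertible (F 0 x)}"
  define Qh where "Qh = qrec A B C"
  have ae: "AE x in lborel. x \<in> S \<longrightarrow> det (F 0 x) \<noteq> 0"
    using F_mof unfolding mof_seq_def by blast
  have dense: "\<And>x. x \<in> S \<Longrightarrow> x \<in> closure Inv"
    using dense_inv[OF S_open ae] unfolding Inv_def by blast
  have QhF: "\<And>n x. x \<in> S \<Longrightarrow> F n x = Qh n x ** F 0 x"
    unfolding Qh_def using qrec_F[OF rec C_inv] by blast
  have Qhdeg: "\<And>n. mpoly_deg n (Qh n)"
    unfolding Qh_def using qrec_deg[of C, OF C_inv] by blast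
  have polysmooth: "\<And>k P. mpoly_le k P \<Longrightarrow> smooth_on S P"
    unfolding smooth_on_def using mpoly_le_smooth by blast
  define H where "H k x = (\<Sum>i\<le>s. real (i choose k) *\<^sub>R (vderivs (i - k) (F 0) x ** G i x ** matrix_inv (F 0 x)))" for k x
  have T: "tilde_op s G (F 0) R x = dop s H R x" if R: "smooth_on S R" and x: "x \<in> Inv" for R x
  proof -
    define iF where "iF = matrix_inv (F 0 x)"
    have xS: "x \<in> S" using x unfolding Inv_def by blast
    have tm: "vderivs i (\<lambda>y. R y ** F 0 y) x ** G i x ** iF
        = (\<Sum>k\<le>s. vderivs k R x ** (real (i choose k) *\<^sub>R (vderivs (i - k) (F 0) x ** G i x ** iF)))"
      if i: "i \<le> s" for i
    proof -
      have "vderivs i (\<lambda>y. R y ** F 0 y) x = (\<Sum>k\<le>i. real (i choose k) *\<^sub>R (vderivs k R x ** vderivs (i - k) (F 0) x))"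
        by (rule leibniz[OF S_open R F0_smooth xS])
      also have "\<dots> = (\<Sum>k\<le>s. real (i choose k) *\<^sub>R (vderivs k R x ** vderivs (i - k) (F 0) x))"
        using i by (intro sum.mono_neutral_left) (auto simp: binomial_eq_0)
      finally show ?thesis
        by (simp add: mm_sum_left mm_scaleR_left mm_scaleR_right matrix_mul_assoc)
    qed
    have "tilde_op s G (F 0) R x = (\<Sum>i\<le>s. vderivs i (\<lambda>y. R y ** F 0 y) x ** G i x ** iF)"
      unfolding tilde_op_def dop_def iF_def by (simp add: mm_sum_left)
    also have "\<dots> = (\<Sum>i\<le>s. \<Sum>k\<le>s. vderivs k R x ** (real (i choose k) *\<^sub>R (vderivs (i - k) (F 0) x ** G i x ** iF)))"
      using tm by simp
    also have "\<dots> = (\<Sum>k\<le>s. \<Sum>i\<le>s. vderivs k R x ** (real (i choose k) *\<^sub>R (vderivs (i - k) (F 0) x ** G i x ** iF)))"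
      by (rule sum.swap)
    also have "\<dots> = dop s H R x"
      unfolding dop_def H_def iF_def by (simp add: mm_sum_right)
    finally show ?thesis .
  qed
  have CC: "tilde_op s G (F 0) P x = \<Lambda> n ** P x" if P: "\<forall>y\<in>S. F n y = P y ** F 0 y" and x: "x \<in> Inv" for P n x
  proof -
    have xS: "x \<in> S" and inv: "invertible (F 0 x)" using x unfolding Inv_def by auto
    have "dop s G (\<lambda>y. P y ** F 0 y) x = dop s G (F n) x"
      unfolding dop_def using vderivs_local[OF S_open, of "\<lambda>y. P y ** F 0 y" "F n", OF _ xS] P by simp
    also have "\<dots> = \<Lambda> n ** (P x ** F 0 x)" using eigen[OF xS] P xS by simp
    finally show ?thesis
      unfolding tilde_op_def using matrix_inv_props(1)[OF inv] by (simp add: matrix_mul_assoc[symmetric])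
  qed
  have Tri: "\<exists>g. mpoly_le k g \<and> (\<forall>x\<in>Inv. H k x = g x)" if "k \<le> s" for k
    using that
  proof (induction k rule: less_induct)
    case (less k)
    have "\<forall>i. \<exists>g. i < k \<longrightarrow> mpoly_le i g \<and> (\<forall>x\<in>Inv. H i x = g x)"
      using less by auto
    then obtain gg where gg: "\<And>i. i < k \<Longrightarrow> mpoly_le i (gg i) \<and> (\<forall>x\<in>Inv. H i x = gg i x)"
      by metis
    obtain M where M: "invertible M" "vderivs k (Qh k) = (\<lambda>x. M)"
      using mpoly_deg_top[OF Qhdeg] by blast
    define g where "g x = matrix_inv M ** (\<Lambda> k ** Qh k x - (\<Sum>i<k. vderivs i (Qh k) x ** gg i x))" for x
    have Qle: "mpoly_le k (Qh k)" using mpoly_deg_le[OF Qhdeg] .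
    have "mpoly_le k (\<lambda>x. \<Sum>i<k. vderivs i (Qh k) x ** gg i x)"
    proof (rule mpoly_le_sum)
      fix i assume "i \<in> {..<k}"
      then have "i < k" by simp
      then have "mpoly_le (k - i + i) (\<lambda>x. vderivs i (Qh k) x ** gg i x)"
        using mpoly_le_mult[OF mpoly_le_vderivs[OF Qle, of i] conjunct1[OF gg[of i]]] by simp
      then show "mpoly_le k (\<lambda>x. vderivs i (Qh k) x ** gg i x)" using \<open>i < k\<close> by simp
    qed simp
    then have gle: "mpoly_le k g"
      unfolding g_def by (rule mpoly_le_lmult[OF mpoly_le_diff[OF mpoly_le_lmult[OF Qle]]])
    have "H k x = g x" if x: "x \<in> Inv" for x
    proof -
      have e1: "dop s H (Qh k) x = \<Lambda> k ** Qh k x"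
      proof -
        have "\<forall>y\<in>S. F k y = Qh k y ** F 0 y" using QhF by blast
        then show ?thesis using T[OF polysmooth[OF Qle] x] CC[of k "Qh k" x] x by simp
      qed
      have "dop s H (Qh k) x = (\<Sum>i\<le>k. vderivs i (Qh k) x ** H i x)"
        unfolding dop_def using less.prems
        by (intro sum.mono_neutral_right) (auto simp: mpoly_le_vderivs_zero[OF Qle])
      also have "\<dots> = vderivs k (Qh k) x ** H k x + (\<Sum>i<k. vderivs i (Qh k) x ** gg i x)"
        using gg x by (simp add: lessThan_Suc_atMost[symmetric])
      finally have "M ** H k x = \<Lambda> k ** Qh k x - (\<Sum>i<k. vderivs i (Qh k) x ** gg i x)"
        using e1 M(2) by (simp add: algebra_simps)
      then have "matrix_inv M ** (M ** H k x) = g x" unfolding g_def by simp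
      then show ?thesis using matrix_inv_props(2)[OF M(1)] by (simp add: matrix_mul_assoc)
    qed
    then show ?case using gle by blast
  qed
  have "\<forall>k. \<exists>g. k \<le> s \<longrightarrow> mpoly_le k g \<and> (\<forall>x\<in>Inv. H k x = g x)" using Tri by blast
  then obtain Gt where Gt: "\<And>k. k \<le> s \<Longrightarrow> mpoly_le k (Gt k) \<and> (\<forall>x\<in>Inv. H k x = Gt k x)"
    by metis
  have dopGH: "dop s Gt R x = dop s H R x" if "x \<in> Inv" for R x
    unfolding dop_def using Gt that by (intro sum.cong) auto
  have clB: "\<forall>x\<in>S. dop s Gt P x = \<Lambda> n ** P x" if P: "mpoly_le k P" "\<forall>y\<in>S. F n y = P y ** F 0 y" for P n k
  proof
    fix x assume x: "x \<in> S"
    define f where "f y = (\<Sum>i\<le>s. vderivs i P y ** Gt i y) - \<Lambda> n ** P y" for y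
    have "mpoly_le (k + s) (\<lambda>y. \<Sum>i\<le>s. vderivs i P y ** Gt i y)"
    proof (rule mpoly_le_sum)
      fix i assume "i \<in> {..s}"
      then have "i \<le> s" by simp
      then have "mpoly_le (k + i) (\<lambda>y. vderivs i P y ** Gt i y)"
        using mpoly_le_mult[OF mpoly_le_vderivs'[OF P(1)] conjunct1[OF Gt]] by blast
      then show "mpoly_le (k + s) (\<lambda>y. vderivs i P y ** Gt i y)"
        by (rule mpoly_le_mono) (use \<open>i \<le> s\<close> in simp)
    qed simp
    then have "mpoly_le (k + s) f"
      unfolding f_def by (rule mpoly_le_diff[OF _ mpoly_le_mono[OF mpoly_le_lmult[OF P(1)]]]) simp
    then have cont: "continuous_on (closure Inv) f"
      using mpoly_le_continuous continuous_on_subset by blast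
    have "f y = 0" if y: "y \<in> Inv" for y
    proof -
      have "dop s Gt P y = \<Lambda> n ** P y"
        using dopGH[OF y] T[OF polysmooth[OF P(1)] y] CC[OF P(2) y] by simp
      then show ?thesis unfolding f_def dop_def by simp
    qed
    then have "f x = 0" using continuous_constant_on_closure[OF cont _ dense[OF x]] by blast
    then show "dop s Gt P x = \<Lambda> n ** P x" unfolding f_def dop_def by simp
  qed
  have int00: "set_integrable lborel S (\<lambda>x. F 0 x ** W x ** mat_adj (F 0 x))"
    using F_mof unfolding mof_seq_def by blast
  have W': "weight_matrix S (\<lambda>x. F 0 x ** W x ** mat_adj (F 0 x))"
    by (rule weight_new[OF W_weight ae int00])
  have Sm: "S \<in> sets lborel" using S_open by simp
  have key: "Qh i x ** (F 0 x ** W x ** mat_adj (F 0 x)) ** mat_adj (Qh j x) = F i x ** W x ** mat_adj (F j x)"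
    if "x \<in> S" for i j x
    using QhF[OF that, of i] QhF[OF that, of j] by (simp add: mat_adj_mult matrix_mul_assoc)
  have DW: "in_DW S (\<lambda>x. F 0 x ** W x ** mat_adj (F 0 x)) s Gt"
    unfolding in_DW_def
  proof (intro exI conjI)
    show "mop_seq S (\<lambda>x. F 0 x ** W x ** mat_adj (F 0 x)) Qh"
      unfolding mop_seq_def
    proof (intro conjI allI impI)
      show "mpoly_deg n (Qh n)" for n by (rule Qhdeg)
      show "set_integrable lborel S (\<lambda>x. Qh i x ** (F 0 x ** W x ** mat_adj (F 0 x)) ** mat_adj (Qh j x))" for i j
        using F_mof unfolding mof_seq_def
        by (subst set_integrable_cong[OF refl refl key]) auto
      show "(LINT x:S|lborel. Qh i x ** (F 0 x ** W x ** mat_adj (F 0 x)) ** mat_adj (Qh j x)) = 0" if "i \<noteq> j" for i j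
        using F_mof that unfolding mof_seq_def
        by (subst set_lebesgue_integral_cong[OF Sm]) (auto simp: key)
    qed
    show "\<forall>n. \<exists>\<Gamma>. \<forall>x\<in>S. dop s Gt (Qh n) x = \<Gamma> ** Qh n x"
      using clB[OF mpoly_deg_le[OF Qhdeg]] QhF by blast
  qed
  have hyp: "hypergeometric S s Gt"
    unfolding hypergeometric_def using Gt unfolding mpoly_le_def by blast
  show ?thesis
  proof (rule conjI, goal_cases)
    case 1
    show "\<exists>Q. (\<forall>n. \<exists>k. mpoly_le k (Q n)) \<and> (\<forall>n. \<forall>x\<in>S. F n x = Q n x ** F 0 x)"
      using mpoly_deg_le[OF Qhdeg] QhF by blast
  next
    case 2
    show ?case
  proof (intro allI impI)
    fix Q :: "nat \<Rightarrow> real \<Rightarrow> 'n cmat"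
    assume Q: "(\<forall>n. \<exists>k. mpoly_le k (Q n)) \<and> (\<forall>n. \<forall>x\<in>S. F n x = Q n x ** F 0 x)"
    show "(\<forall>n. \<forall>x\<in>S. invertible (F 0 x) \<longrightarrow> tilde_op s G (F 0) (Q n) x = \<Lambda> n ** Q n x)
         \<and> weight_matrix S (\<lambda>x. F 0 x ** W x ** mat_adj (F 0 x))
         \<and> (\<exists>Gt. (\<forall>R. smooth_on S R \<longrightarrow>
                    (\<forall>x\<in>S. invertible (F 0 x) \<longrightarrow> tilde_op s G (F 0) R x = dop s Gt R x))
                \<and> (\<forall>n. \<forall>x\<in>S. dop s Gt (Q n) x = \<Lambda> n ** Q n x)
                \<and> in_DW S (\<lambda>x. F 0 x ** W x ** mat_adj (F 0 x)) s Gt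
                \<and> hypergeometric S s Gt)"
    proof (intro conjI)
    show "\<forall>n. \<forall>x\<in>S. invertible (F 0 x) \<longrightarrow> tilde_op s G (F 0) (Q n) x = \<Lambda> n ** Q n x"
      using CC Q unfolding Inv_def by blast
    show "weight_matrix S (\<lambda>x. F 0 x ** W x ** mat_adj (F 0 x))" by (rule W')
    show "\<exists>Gt. (\<forall>R. smooth_on S R \<longrightarrow>
                    (\<forall>x\<in>S. invertible (F 0 x) \<longrightarrow> tilde_op s G (F 0) R x = dop s Gt R x))
                \<and> (\<forall>n. \<forall>x\<in>S. dop s Gt (Q n) x = \<Lambda> n ** Q n x)
                \<and> in_DW S (\<lambda>x. F 0 x ** W x ** mat_adj (F 0 x)) s Gt
                \<and> hypergeometric S s Gt"
    proof (intro exI conjI allI impI ballI)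
      fix R :: "real \<Rightarrow> 'n cmat" and x assume "smooth_on S R" "x \<in> S" "invertible (F 0 x)"
      then show "tilde_op s G (F 0) R x = dop s Gt R x"
        using T dopGH unfolding Inv_def by auto
    next
      fix n x assume x: "x \<in> S"
      obtain k where "mpoly_le k (Q n)" using Q by blast
      then show "dop s Gt (Q n) x = \<Lambda> n ** Q n x" using clB Q x by blast
    qed (use DW hyp in auto)
  qed
  qed
  qed
qed


end
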